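(* In the linear deterministic diamond network with a disturbing node with gains $n_1,n_2,n_3,n_4,m$, suppose $n_1=n_2$ and $m\ge n_1$. Then $R(G_A,G_B)=0$ for every choice of $G_A,G_B$; in particular the linear capacity is $C=0$.
   Context: The shift matrix $Q$ is the $q\times q$ matrix over $\mathbb{F}_2$ with $Q_{i+1,i}=1$ for $1\le i\le q-1$ and all other entries $0$, where $q=\max(n_1,n_2,n_3,n_4,m)$ and all gains are nonnegative integers. Network: source $S$, relays $A,B$, destination $D$, disturbing node $M$; gains $n_1$ ($S\to A$), $n_2$ ($S\to B$), $n_3$ ($A\to D$), $n_4$ ($B\to D$), $m$ ($M\to A$ and $M\to B$). Each node transmits $x_i\in\mathbb{F}_2^q$ and receives $y_j=\sum_{k:(k,j)\text{ an edge}}Q^{q-n_{(k,j)}}x_k$; relays use linear maps $x_A=G_Ay_A$, $x_B=G_By_B$ with $G_A,G_B$ arbitrary $q\times q$ matrices over $\mathbb{F}_2$. Then $y_D=G_Sx_S+G_Mx_M$ with $G_S=Q^{q-n_3}G_AQ^{q-n_1}+Q^{q-n_4}G_BQ^{q-n_2}$ and $G_M=Q^{q-n_3}G_AQ^{q-m}+Q^{q-n_4}G_BQ^{q-m}$. The rate $R(G_A,G_B)$ is the maximum dimension of a subspace $\mathcal{X}\subseteq\mathbb{F}_2^q$ such that for all $x_S,x_S'\in\mathcal{X}$, $x_M,x_M'\in\mathbb{F}_2^q$, $G_Sx_S+G_Mx_M=G_Sx_S'+G_Mx_M'$ implies $x_S=x_S'$. The linear capacity is $C=\max_{G_A,G_B}R(G_A,G_B)$.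 *)

theory Defs
  imports "Jordan_Normal_Form.VS_Connect" "HOL-Library.Z2"
begin

definition qdim :: "nat \<Rightarrow> nat \<Rightarrow> nat \<Rightarrow> nat \<Rightarrow> nat \<Rightarrow> nat" where
  "qdim n1 n2 n3 n4 m = Max {n1, n2, n3, n4, m}"

text \<open>Shift matrix: Q_{i+1,i} = 1 (1-based), i.e. entry (i+1,i) = 1 (0-based).\<close>
definition shiftQ :: "nat \<Rightarrow> bit mat" where
  "shiftQ q = mat q q (\<lambda>(i, j). if i = Suc j then 1 else 0)"

definition chanS :: "nat \<Rightarrow> nat \<Rightarrow> nat \<Rightarrow> nat \<Rightarrow> nat \<Rightarrow> bit mat \<Rightarrow> bit mat \<Rightarrow> bit mat" where
  "chanS n1 n2 n3 n4 m GA GB =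
     (let q = qdim n1 n2 n3 n4 m; Q = shiftQ q in
       Q ^\<^sub>m (q - n3) * GA * Q ^\<^sub>m (q - n1) + Q ^\<^sub>m (q - n4) * GB * Q ^\<^sub>m (q - n2))"

definition chanM :: "nat \<Rightarrow> nat \<Rightarrow> nat \<Rightarrow> nat \<Rightarrow> nat \<Rightarrow> bit mat \<Rightarrow> bit mat \<Rightarrow> bit mat" where
  "chanM n1 n2 n3 n4 m GA GB =
     (let q = qdim n1 n2 n3 n4 m; Q = shiftQ q in
       Q ^\<^sub>m (q - n3) * GA * Q ^\<^sub>m (q - m) + Q ^\<^sub>m (q - n4) * GB * Q ^\<^sub>m (q - m))"

text \<open>A subspace X of GF(2)^q is admissible if the source symbol from X is
  uniquely decodable at D whatever the disturbing node sends.\<close>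
definition admissible :: "nat \<Rightarrow> nat \<Rightarrow> nat \<Rightarrow> nat \<Rightarrow> nat \<Rightarrow> bit mat \<Rightarrow> bit mat \<Rightarrow> bit vec set \<Rightarrow> bool" where
  "admissible n1 n2 n3 n4 m GA GB X \<longleftrightarrow>
     (let q = qdim n1 n2 n3 n4 m; GS = chanS n1 n2 n3 n4 m GA GB; GM = chanM n1 n2 n3 n4 m GA GB in
       VectorSpace.subspace class_ring X (module_vec TYPE(bit) q) \<and>
       (\<forall>xS\<in>X. \<forall>xS'\<in>X. \<forall>xM\<in>carrier_vec q. \<forall>xM'\<in>carrier_vec q.
          GS *\<^sub>v xS + GM *\<^sub>v xM = GS *\<^sub>v xS' + GM *\<^sub>v xM' \<longrightarrow> xS = xS'))"

definition rate :: "nat \<Rightarrow> nat \<Rightarrow> nat \<Rightarrow> nat \<Rightarrow> nat \<Rightarrow> bit mat \<Rightarrow> bit mat \<Rightarrow> nat" where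
  "rate n1 n2 n3 n4 m GA GB =
     Max {vectorspace.dim class_ring ((module_vec TYPE(bit) (qdim n1 n2 n3 n4 m))\<lparr>carrier := X\<rparr>)
          | X. admissible n1 n2 n3 n4 m GA GB X}"

definition linear_capacity :: "nat \<Rightarrow> nat \<Rightarrow> nat \<Rightarrow> nat \<Rightarrow> nat \<Rightarrow> nat" where
  "linear_capacity n1 n2 n3 n4 m =
     Max {rate n1 n2 n3 n4 m GA GB | GA GB.
            GA \<in> carrier_mat (qdim n1 n2 n3 n4 m) (qdim n1 n2 n3 n4 m) \<and>
            GB \<in> carrier_mat (qdim n1 n2 n3 n4 m) (qdim n1 n2 n3 n4 m)}"

end

theory Submission
  imports Defs "Jordan_Normal_Form.DL_Rank"
begin

lemma dim0: "vectorspace.dim class_ring ((module_vec TYPE(bit) q)\<lparr>carrier := {0\<^sub>v q}\<rparr>) = 0"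
proof -
  interpret vec_space "TYPE(bit)" q .
  have "span {} = {0\<^sub>v q}" using span_empty by simp
  with dim_zero_vs show ?thesis by simp
qed

lemma sub0: "VectorSpace.subspace class_ring {0\<^sub>v q} (module_vec TYPE(bit) q)"
proof -
  interpret vec_space "TYPE(bit)" q .
  have "span {} = {0\<^sub>v q}" using span_empty by simp
  moreover have "VectorSpace.subspace class_ring (span {}) V" by (rule span_is_subspace) simp
  ultimately show ?thesis by simp
qed

lemma pow_split:
  fixes Q :: "'a::semiring_1 mat"
  assumes "Q \<in> carrier_mat q q"
  shows "Q ^\<^sub>m (a + b) = Q ^\<^sub>m a * Q ^\<^sub>m b"
proof (induction b)
  case 0 then show ?case using assms by simp
next
  case (Suc b)
  have "Q ^\<^sub>m (a + Suc b) = (Q ^\<^sub>m a * Q ^\<^sub>m b) * Q" using Suc by simp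
  also have "\<dots> = Q ^\<^sub>m a * (Q ^\<^sub>m b * Q)"
    using assms by (intro assoc_mult_mat) auto
  finally show ?case by simp
qed

lemma key:
  fixes n1 n2 n3 n4 m :: nat
  assumes "n1 = n2" and "m \<ge> n1"
    and GA: "GA \<in> carrier_mat (qdim n1 n2 n3 n4 m) (qdim n1 n2 n3 n4 m)"
    and GB: "GB \<in> carrier_mat (qdim n1 n2 n3 n4 m) (qdim n1 n2 n3 n4 m)"
    and x: "x \<in> carrier_vec (qdim n1 n2 n3 n4 m)"
  shows "chanS n1 n2 n3 n4 m GA GB *\<^sub>v x =
         chanM n1 n2 n3 n4 m GA GB *\<^sub>v ((shiftQ (qdim n1 n2 n3 n4 m) ^\<^sub>m (m - n1)) *\<^sub>v x)"
proof -
  define q where "q = qdim n1 n2 n3 n4 m"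
  define Q where "Q = shiftQ q"
  have Qc: "Q \<in> carrier_mat q q" unfolding Q_def shiftQ_def by simp
  have mq: "m \<le> q" unfolding q_def qdim_def by simp
  have e: "q - n1 = (q - m) + (m - n1)" using mq assms(2) by simp
  define A1 where "A1 = Q ^\<^sub>m (q - n3)"
  define B1 where "B1 = Q ^\<^sub>m (q - n4)"
  define R where "R = Q ^\<^sub>m (q - m)"
  define T where "T = Q ^\<^sub>m (m - n1)"
  have P: "Q ^\<^sub>m (q - n1) = R * T" unfolding R_def T_def e using pow_split[OF Qc] by simp
  have c: "A1 \<in> carrier_mat q q" "B1 \<in> carrier_mat q q" "R \<in> carrier_mat q q" "T \<in> carrier_mat q q"
    using Qc unfolding A1_def B1_def R_def T_def by auto
  have GA': "GA \<in> carrier_mat q q" and GB': "GB \<in> carrier_mat q q" and x': "x \<in> carrier_vec q"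
    using GA GB x q_def by auto
  have S: "chanS n1 n2 n3 n4 m GA GB = A1 * GA * (R * T) + B1 * GB * (R * T)"
    unfolding chanS_def Let_def q_def[symmetric] Q_def[symmetric] A1_def B1_def
    using P assms(1) by simp
  have M: "chanM n1 n2 n3 n4 m GA GB = A1 * GA * R + B1 * GB * R"
    unfolding chanM_def Let_def q_def[symmetric] Q_def[symmetric] A1_def B1_def R_def by simp
  have "chanS n1 n2 n3 n4 m GA GB = (A1 * GA * R + B1 * GB * R) * T"
  proof -
    have d: "(A1 * GA * R + B1 * GB * R) * T = A1 * GA * R * T + B1 * GB * R * T"
      by (rule add_mult_distrib_mat) (use c GA' GB' in auto)
    have a1: "A1 * GA * R * T = A1 * GA * (R * T)"
      by (rule assoc_mult_mat) (use c GA' GB' in auto)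
    have a2: "B1 * GB * R * T = B1 * GB * (R * T)"
      by (rule assoc_mult_mat) (use c GA' GB' in auto)
    show ?thesis unfolding S d a1 a2 ..
  qed
  hence "chanS n1 n2 n3 n4 m GA GB *\<^sub>v x = chanM n1 n2 n3 n4 m GA GB *\<^sub>v (T *\<^sub>v x)"
    unfolding M using c GA' GB' x' by (simp add: assoc_mult_mat_vec[of _ q q _ q])
  thus ?thesis unfolding T_def Q_def q_def .
qed

lemma shiftQ_carrier: "shiftQ q \<in> carrier_mat q q"
  unfolding shiftQ_def by simp

lemma adm_zero:
  fixes n1 n2 n3 n4 m :: nat
  assumes "n1 = n2" and "m \<ge> n1"
    and GA: "GA \<in> carrier_mat (qdim n1 n2 n3 n4 m) (qdim n1 n2 n3 n4 m)"
    and GB: "GB \<in> carrier_mat (qdim n1 n2 n3 n4 m) (qdim n1 n2 n3 n4 m)"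
    and adm: "admissible n1 n2 n3 n4 m GA GB X"
  shows "X = {0\<^sub>v (qdim n1 n2 n3 n4 m)}"
proof -
  define q where "q = qdim n1 n2 n3 n4 m"
  define GS where "GS = chanS n1 n2 n3 n4 m GA GB"
  define GM where "GM = chanM n1 n2 n3 n4 m GA GB"
  define T where "T = shiftQ q ^\<^sub>m (m - n1)"
  have conj: "VectorSpace.subspace class_ring X (module_vec TYPE(bit) q) \<and>
       (\<forall>xS\<in>X. \<forall>xS'\<in>X. \<forall>xM\<in>carrier_vec q. \<forall>xM'\<in>carrier_vec q.
          GS *\<^sub>v xS + GM *\<^sub>v xM = GS *\<^sub>v xS' + GM *\<^sub>v xM' \<longrightarrow> xS = xS')"
    using adm unfolding admissible_def Let_def q_def GS_def GM_def .
  have sub: "VectorSpace.subspace class_ring X (module_vec TYPE(bit) q)"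
    using conj by (rule conjunct1)
  have inj: "\<forall>xS\<in>X. \<forall>xS'\<in>X. \<forall>xM\<in>carrier_vec q. \<forall>xM'\<in>carrier_vec q.
          GS *\<^sub>v xS + GM *\<^sub>v xM = GS *\<^sub>v xS' + GM *\<^sub>v xM' \<longrightarrow> xS = xS'"
    using conj by (rule conjunct2)
  have sm: "submodule class_ring X (module_vec TYPE(bit) q)"
    using sub unfolding VectorSpace.subspace_def by (rule conjunct2)
  have Xc: "X \<subseteq> carrier_vec q" using submodule.subset[OF sm] by (simp add: module_vec_def)
  have z: "0\<^sub>v q \<in> X" using submodule.zero_closed[OF sm] by (simp add: module_vec_def)
  have GA': "GA \<in> carrier_mat q q" and GB': "GB \<in> carrier_mat q q" using GA GB q_def by auto
  have Qc: "shiftQ q \<in> carrier_mat q q" by (rule shiftQ_carrier)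
  have GSc: "GS \<in> carrier_mat q q" unfolding GS_def chanS_def Let_def q_def[symmetric]
    by (meson add_carrier_mat mult_carrier_mat pow_carrier_mat Qc GA' GB')
  have GMc: "GM \<in> carrier_mat q q" unfolding GM_def chanM_def Let_def q_def[symmetric]
    by (meson add_carrier_mat mult_carrier_mat pow_carrier_mat Qc GA' GB')
  have Tc: "T \<in> carrier_mat q q" unfolding T_def by (intro pow_carrier_mat Qc)
  have "x = 0\<^sub>v q" if xX: "x \<in> X" for x
  proof -
    have xc: "x \<in> carrier_vec q" using xX Xc by blast
    have k: "GS *\<^sub>v x = GM *\<^sub>v (T *\<^sub>v x)"
      unfolding GS_def GM_def T_def q_def
      by (rule key[OF assms(1,2) GA GB xc[unfolded q_def]])
    have e1: "GM *\<^sub>v 0\<^sub>v q = 0\<^sub>v q" using GMc by auto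
    have e2: "GS *\<^sub>v 0\<^sub>v q = 0\<^sub>v q" using GSc by auto
    have c1: "GS *\<^sub>v x \<in> carrier_vec q" using GSc xc by auto
    have c2: "GM *\<^sub>v (T *\<^sub>v x) \<in> carrier_vec q" using GMc Tc xc by auto
    have eq: "GS *\<^sub>v x + GM *\<^sub>v 0\<^sub>v q = GS *\<^sub>v 0\<^sub>v q + GM *\<^sub>v (T *\<^sub>v x)"
      unfolding e1 e2 k using c2 by simp
    have tx: "T *\<^sub>v x \<in> carrier_vec q" using Tc xc by simp
    show ?thesis by (rule inj[rule_format, OF xX z zero_carrier_vec tx eq])
  qed
  with z have "X = {0\<^sub>v q}" by blast
  thus ?thesis unfolding q_def .
qed

lemma rate0:
  fixes n1 n2 n3 n4 m :: nat
  assumes "n1 = n2" and "m \<ge> n1"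
    and GA: "GA \<in> carrier_mat (qdim n1 n2 n3 n4 m) (qdim n1 n2 n3 n4 m)"
    and GB: "GB \<in> carrier_mat (qdim n1 n2 n3 n4 m) (qdim n1 n2 n3 n4 m)"
  shows "rate n1 n2 n3 n4 m GA GB = 0"
proof -
  define q where "q = qdim n1 n2 n3 n4 m"
  have a0: "admissible n1 n2 n3 n4 m GA GB {0\<^sub>v q}"
    unfolding admissible_def Let_def q_def[symmetric]
  proof (intro conjI ballI impI)
    show "VectorSpace.subspace class_ring {0\<^sub>v q} (module_vec TYPE(bit) q)" by (rule sub0)
  next
    fix xS xS' :: "bit vec"
    assume "xS \<in> {0\<^sub>v q}" "xS' \<in> {0\<^sub>v q}"
    thus "xS = xS'" by simp
  qed
  have "{vectorspace.dim class_ring ((module_vec TYPE(bit) q)\<lparr>carrier := X\<rparr>)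
          | X. admissible n1 n2 n3 n4 m GA GB X} = {0}"
  proof (intro equalityI subsetI)
    fix d assume "d \<in> {vectorspace.dim class_ring ((module_vec TYPE(bit) q)\<lparr>carrier := X\<rparr>)
          | X. admissible n1 n2 n3 n4 m GA GB X}"
    then obtain X where d: "d = vectorspace.dim class_ring ((module_vec TYPE(bit) q)\<lparr>carrier := X\<rparr>)"
      and aX: "admissible n1 n2 n3 n4 m GA GB X" by blast
    have "X = {0\<^sub>v q}" using adm_zero[OF assms aX] unfolding q_def .
    then show "d \<in> {0}" using d dim0[of q] by simp
  next
    fix d assume "d \<in> {0::nat}"
    hence "d = vectorspace.dim class_ring ((module_vec TYPE(bit) q)\<lparr>carrier := {0\<^sub>v q}\<rparr>)"
      using dim0[of q] by simp
    then show "d \<in> {vectorspace.dim class_ring ((module_vec TYPE(bit) q)\<lparr>carrier := X\<rparr>)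
          | X. admissible n1 n2 n3 n4 m GA GB X}" using a0 by blast
  qed
  thus ?thesis unfolding rate_def q_def[symmetric] by simp
qed

theorem mainTheorem8:
  fixes n1 n2 n3 n4 m :: nat
  assumes "n1 = n2" and "m \<ge> n1"
  shows "(\<forall>GA \<in> carrier_mat (qdim n1 n2 n3 n4 m) (qdim n1 n2 n3 n4 m).
          \<forall>GB \<in> carrier_mat (qdim n1 n2 n3 n4 m) (qdim n1 n2 n3 n4 m).
            rate n1 n2 n3 n4 m GA GB = 0)
       \<and> linear_capacity n1 n2 n3 n4 m = 0"
proof -
  define q where "q = qdim n1 n2 n3 n4 m"
  have R: "\<forall>GA \<in> carrier_mat q q. \<forall>GB \<in> carrier_mat q q. rate n1 n2 n3 n4 m GA GB = 0"
    using rate0[OF assms] unfolding q_def by blast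
  have S: "{rate n1 n2 n3 n4 m GA GB | GA GB.
            GA \<in> carrier_mat q q \<and> GB \<in> carrier_mat q q} = {0}"
  proof (intro equalityI subsetI)
    fix d assume "d \<in> {rate n1 n2 n3 n4 m GA GB | GA GB.
            GA \<in> carrier_mat q q \<and> GB \<in> carrier_mat q q}"
    then obtain GA GB where "d = rate n1 n2 n3 n4 m GA GB" "GA \<in> carrier_mat q q" "GB \<in> carrier_mat q q"
      by blast
    with R show "d \<in> {0}" by simp
  next
    fix d :: nat assume "d \<in> {0}"
    hence d: "d = rate n1 n2 n3 n4 m (0\<^sub>m q q) (0\<^sub>m q q)" using R by simp
    have z: "(0\<^sub>m q q :: bit mat) \<in> carrier_mat q q" by simp
    show "d \<in> {rate n1 n2 n3 n4 m GA GB | GA GB.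
            GA \<in> carrier_mat q q \<and> GB \<in> carrier_mat q q}"
      using d z by blast
  qed
  have L: "linear_capacity n1 n2 n3 n4 m = 0"
    unfolding linear_capacity_def q_def[symmetric] S by simp
  show ?thesis using R L unfolding q_def by blast
qed

end
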